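(* The quadric $\mathcal E$ is an elliptic quadric of $\mathrm{PG}(W)\cong\mathrm{PG}(3,q)$.
   Context: $q$ is a prime power. Regard $\mathbb F_{q^6}$ as a $6$-dimensional $\mathbb F_q$-vector space. Let $F(X)=X^{q^2}-X^q+X$, an $\mathbb F_q$-linear map of $\mathbb F_{q^6}$, and $W=F(\mathbb F_{q^6})=\{z\in\mathbb F_{q^6} : z+z^q=z^{q^3}+z^{q^4}\}$, a $4$-dimensional $\mathbb F_q$-subspace, so $\mathrm{PG}(W)\cong\mathrm{PG}(3,q)$ with points $\langle z\rangle=\mathbb F_q^*z$. Let $\Phi(z)=z^{q^2}z+z^{q^2}z^{q}+z^{q}z^{q^3}$; for $z\in W$ one has $\Phi(z)\in\mathbb F_q$ and $\Phi$ is a quadratic form on $W$; $\mathcal E=\{\langle z\rangle\in\mathrm{PG}(W):\Phi(z)=0\}$. *)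

theory Defs
  imports "HOL-Computational_Algebra.Primes"
begin

definition subfield_q :: "nat \<Rightarrow> ('a::field) set" where
  "subfield_q q = {x. x ^ q = x}"

definition is_subspace :: "'a::field set \<Rightarrow> 'a set \<Rightarrow> bool" where
  "is_subspace K V \<longleftrightarrow> 0 \<in> V \<and> (\<forall>u\<in>V. \<forall>v\<in>V. u + v \<in> V) \<and> (\<forall>c\<in>K. \<forall>v\<in>V. c * v \<in> V)"

definition lin_indep4 :: "'a::field set \<Rightarrow> 'a \<Rightarrow> 'a \<Rightarrow> 'a \<Rightarrow> 'a \<Rightarrow> bool" where
  "lin_indep4 K b0 b1 b2 b3 \<longleftrightarrow>
     (\<forall>c0\<in>K. \<forall>c1\<in>K. \<forall>c2\<in>K. \<forall>c3\<in>K.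
        c0*b0 + c1*b1 + c2*b2 + c3*b3 = 0 \<longrightarrow> c0 = 0 \<and> c1 = 0 \<and> c2 = 0 \<and> c3 = 0)"

definition dim4_subspace :: "'a::field set \<Rightarrow> 'a set \<Rightarrow> bool" where
  "dim4_subspace K V \<longleftrightarrow> is_subspace K V \<and>
     (\<exists>b0\<in>V. \<exists>b1\<in>V. \<exists>b2\<in>V. \<exists>b3\<in>V. lin_indep4 K b0 b1 b2 b3 \<and>
        V = {c0*b0 + c1*b1 + c2*b2 + c3*b3 | c0 c1 c2 c3. c0\<in>K \<and> c1\<in>K \<and> c2\<in>K \<and> c3\<in>K})"

definition polar :: "('a::field \<Rightarrow> 'a) \<Rightarrow> 'a \<Rightarrow> 'a \<Rightarrow> 'a" where
  "polar Q u v = Q (u + v) - Q u - Q v"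

definition quadratic_form_on :: "'a::field set \<Rightarrow> 'a set \<Rightarrow> ('a \<Rightarrow> 'a) \<Rightarrow> bool" where
  "quadratic_form_on K V Q \<longleftrightarrow>
     (\<forall>v\<in>V. Q v \<in> K) \<and>
     (\<forall>c\<in>K. \<forall>v\<in>V. Q (c * v) = c^2 * Q v) \<and>
     (\<forall>u\<in>V. \<forall>u'\<in>V. \<forall>v\<in>V. polar Q (u + u') v = polar Q u v + polar Q u' v) \<and>
     (\<forall>c\<in>K. \<forall>u\<in>V. \<forall>v\<in>V. polar Q (c * u) v = c * polar Q u v)"

definition nonsingular_qf :: "'a::field set \<Rightarrow> ('a \<Rightarrow> 'a) \<Rightarrow> bool" where
  "nonsingular_qf V Q \<longleftrightarrow>
     (\<forall>v\<in>V. v \<noteq> 0 \<and> Q v = 0 \<and> (\<forall>w\<in>V. polar Q v w = 0) \<longrightarrow> False)"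

definition contains_no_line :: "'a::field set \<Rightarrow> 'a set \<Rightarrow> ('a \<Rightarrow> 'a) \<Rightarrow> bool" where
  "contains_no_line K V Q \<longleftrightarrow>
     (\<forall>u\<in>V. \<forall>v\<in>V. (\<forall>a\<in>K. \<forall>b\<in>K. a*u + b*v = 0 \<longrightarrow> a = 0 \<and> b = 0) \<longrightarrow>
        \<not> (\<forall>a\<in>K. \<forall>b\<in>K. Q (a*u + b*v) = 0))"

definition elliptic_quadric :: "'a::field set \<Rightarrow> 'a set \<Rightarrow> ('a \<Rightarrow> 'a) \<Rightarrow> bool" where
  "elliptic_quadric K V Q \<longleftrightarrow> dim4_subspace K V \<and> quadratic_form_on K V Q \<and>
     nonsingular_qf V Q \<and> contains_no_line K V Q"

end

theory Submission
  imports Defs "HOL-Number_Theory.Residues" "HOL-Computational_Algebra.Polynomial"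
begin


lemma pow_card_same:
  fixes x :: "'a::{finite,field}"
  shows "x ^ card (UNIV :: 'a set) = x"
proof (cases "x = 0")
  case False
  have "x * (\<Prod>y\<in>UNIV-{0}. x * y) = x * x ^ (card (UNIV :: 'a set) - 1) * \<Prod>(UNIV-{0})"
    by (simp add: prod.distrib mult_ac)
  also have "x * x ^ (card (UNIV :: 'a set) - 1) = x ^ Suc (card (UNIV :: 'a set) - 1)"
    by (subst power_Suc) auto
  also have "Suc (card (UNIV :: 'a set) - 1) = card (UNIV :: 'a set)"
    using finite_UNIV_card_ge_0[where ?'a = 'a] by simp
  also have "(\<Prod>y\<in>UNIV-{0}. x * y) = (\<Prod>y\<in>UNIV-{0}. y)"
    by (rule prod.reindex_bij_witness[of _ "\<lambda>y. y / x" "\<lambda>y. x * y"]) (use False in auto)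
  finally show ?thesis
    by simp
qed (use finite_UNIV_card_ge_0[where ?'a = 'a] in auto)

lemma frob_setup:
  fixes q :: nat
  assumes "\<exists>p k. prime p \<and> k > 0 \<and> q = p ^ k"
    and "card (UNIV :: 'a::{finite,field} set) = q ^ 6"
  shows "q > 1 \<and> (\<forall>x y :: 'a. (x + y) ^ q = x ^ q + y ^ q)"
proof -
  obtain p k where p: "prime p" "k > 0" "q = p ^ k" using assms(1) by blast
  have q1: "q > 1" using p by (metis one_less_power prime_gt_1_nat)
  have pc: "prime CHAR('a)"
    using prime_CHAR_semidom[where ?'a='a] finite_imp_CHAR_pos[where ?'a='a] by auto
  have "CHAR('a) dvd p ^ (k * 6)" using CHAR_dvd_CARD[where 'a='a] assms(2) p
    by (simp add: power_mult)
  hence "CHAR('a) dvd p" using pc prime_dvd_power by blast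
  hence cp: "CHAR('a) = p" using pc p by (simp add: primes_dvd_imp_eq)
  show ?thesis using q1 freshmans_dream'[OF pc, of q k] cp p by auto
qed



declare One_nat_def [simp del]

locale ffq =
  fixes q :: nat and ty :: "'a::{finite,field} itself"
  assumes q_gt1: "q > 1"
  and frob_add: "\<And>x y :: 'a. (x+y)^q = x^q + y^q"
  and cardF: "card (UNIV :: 'a set) = q^6"
begin

definition fr :: "nat \<Rightarrow> 'a \<Rightarrow> 'a" where "fr i x = x ^ (q ^ i)"

lemma fr_add: "fr i (x + y) = fr i x + fr i y"
proof (induction i)
  case 0 then show ?case by (simp add: fr_def)
next
  case (Suc i)
  have "fr (Suc i) z = (fr i z) ^ q" for z by (metis fr_def power_Suc2 power_mult)
  then show ?case using Suc frob_add by simp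
qed

lemma fr_0 [simp]: "fr i 0 = 0" using q_gt1 by (simp add: fr_def)
lemma fr_1 [simp]: "fr i 1 = 1" by (simp add: fr_def)
lemma fr_mult: "fr i (x * y) = fr i x * fr i y" by (simp add: fr_def power_mult_distrib)
lemma fr_neg: "fr i (- x) = - fr i x"
  using fr_add[of i x "-x"] by (simp add: eq_neg_iff_add_eq_0 add.commute)
lemma fr_diff: "fr i (x - y) = fr i x - fr i y"
  using fr_add[of i x "-y"] fr_neg by simp
lemma fr_fr: "fr i (fr j x) = fr (j + i) x"
  by (simp add: fr_def power_mult power_add)
lemma fr_zero_idx [simp]: "fr 0 x = x" by (simp add: fr_def)
lemma fr6: "fr 6 x = x" using pow_card_same[of x] cardF by (simp add: fr_def)
lemma fr_ge6: "6 \<le> n \<Longrightarrow> fr n x = fr (n - 6) x"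
proof -
  assume "6 \<le> n"
  then have "n = (n - 6) + 6" by simp
  have e: "n - 6 + 6 = n" using \<open>6 \<le> n\<close> by simp
  have "fr 6 (fr (n-6) x) = fr (n-6+6) x" by (rule fr_fr)
  then have "fr (n-6) x = fr n x" by (simp only: e fr6)
  then show ?thesis by simp
qed
lemma fr_plus6: "fr (n + 6) x = fr n x" by (metis fr_fr fr6)

lemma fr_big [simp]: "fr 6 x = x" "fr 7 x = fr 1 x" "fr 8 x = fr 2 x" "fr 9 x = fr 3 x"
  "fr 10 x = fr 4 x" "fr 11 x = fr 5 x"
proof -
  have e: "(7::nat) = 1 + 6" "(8::nat) = 2 + 6" "(9::nat) = 3 + 6" "(10::nat) = 4 + 6" "(11::nat) = 5 + 6"
    by simp_all
  show "fr 6 x = x" by (rule fr6)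
  show "fr 7 x = fr 1 x" "fr 8 x = fr 2 x" "fr 9 x = fr 3 x" "fr 10 x = fr 4 x" "fr 11 x = fr 5 x"
    by (simp_all only: e fr_plus6)
qed

lemma fr_tab [simp]:
  "fr 1 (fr 1 x) = fr 2 x"
  "fr 1 (fr 2 x) = fr 3 x"
  "fr 1 (fr 3 x) = fr 4 x"
  "fr 1 (fr 4 x) = fr 5 x"
  "fr 1 (fr 5 x) = x"
  "fr 2 (fr 1 x) = fr 3 x"
  "fr 2 (fr 2 x) = fr 4 x"
  "fr 2 (fr 3 x) = fr 5 x"
  "fr 2 (fr 4 x) = x"
  "fr 2 (fr 5 x) = fr 1 x"
  "fr 3 (fr 1 x) = fr 4 x"
  "fr 3 (fr 2 x) = fr 5 x"
  "fr 3 (fr 3 x) = x"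
  "fr 3 (fr 4 x) = fr 1 x"
  "fr 3 (fr 5 x) = fr 2 x"
  "fr 4 (fr 1 x) = fr 5 x"
  "fr 4 (fr 2 x) = x"
  "fr 4 (fr 3 x) = fr 1 x"
  "fr 4 (fr 4 x) = fr 2 x"
  "fr 4 (fr 5 x) = fr 3 x"
  "fr 5 (fr 1 x) = x"
  "fr 5 (fr 2 x) = fr 1 x"
  "fr 5 (fr 3 x) = fr 2 x"
  "fr 5 (fr 4 x) = fr 3 x"
  "fr 5 (fr 5 x) = fr 4 x"
proof -
  have e: "(1::nat) + 1 = 2" "(2::nat) + 1 = 3" "(3::nat) + 1 = 4" "(4::nat) + 1 = 5" "(5::nat) + 1 = 6" "(1::nat) + 2 = 3" "(2::nat) + 2 = 4" "(3::nat) + 2 = 5" "(4::nat) + 2 = 6" "(5::nat) + 2 = 7" "(1::nat) + 3 = 4" "(2::nat) + 3 = 5" "(3::nat) + 3 = 6" "(4::nat) + 3 = 7" "(5::nat) + 3 = 8" "(1::nat) + 4 = 5" "(2::nat) + 4 = 6" "(3::nat) + 4 = 7" "(4::nat) + 4 = 8" "(5::nat) + 4 = 9" "(1::nat) + 5 = 6" "(2::nat) + 5 = 7" "(3::nat) + 5 = 8" "(4::nat) + 5 = 9" "(5::nat) + 5 = 10" by arith+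
  show  "fr 1 (fr 1 x) = fr 2 x" "fr 1 (fr 2 x) = fr 3 x" "fr 1 (fr 3 x) = fr 4 x" "fr 1 (fr 4 x) = fr 5 x" "fr 1 (fr 5 x) = x" "fr 2 (fr 1 x) = fr 3 x" "fr 2 (fr 2 x) = fr 4 x" "fr 2 (fr 3 x) = fr 5 x" "fr 2 (fr 4 x) = x" "fr 2 (fr 5 x) = fr 1 x" "fr 3 (fr 1 x) = fr 4 x" "fr 3 (fr 2 x) = fr 5 x" "fr 3 (fr 3 x) = x" "fr 3 (fr 4 x) = fr 1 x" "fr 3 (fr 5 x) = fr 2 x" "fr 4 (fr 1 x) = fr 5 x" "fr 4 (fr 2 x) = x" "fr 4 (fr 3 x) = fr 1 x" "fr 4 (fr 4 x) = fr 2 x" "fr 4 (fr 5 x) = fr 3 x" "fr 5 (fr 1 x) = x" "fr 5 (fr 2 x) = fr 1 x" "fr 5 (fr 3 x) = fr 2 x" "fr 5 (fr 4 x) = fr 3 x" "fr 5 (fr 5 x) = fr 4 x"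

    by (simp_all only: fr_fr e fr_big)
qed

lemma fr_eq0_iff [simp]: "fr i x = 0 \<longleftrightarrow> x = 0" using q_gt1 by (simp add: fr_def)

lemmas fr_simps = fr_add fr_mult fr_neg fr_diff

lemma fr_power: "fr i (x ^ n) = (fr i x) ^ n" by (simp add: fr_def power_mult[symmetric] mult.commute)

definition K :: "'a set" where "K = {x. x ^ q = x}"

lemma K_fr: "c \<in> K \<Longrightarrow> fr i c = c"
proof (induction i)
  case (Suc i)
  have "fr (Suc i) c = fr 1 (fr i c)" by (simp add: fr_fr Suc_eq_plus1)
  also have "\<dots> = c" using Suc by (simp add: K_def fr_def)
  finally show ?case .
qed simp

lemma K_iff: "c \<in> K \<longleftrightarrow> fr 1 c = c" by (simp add: K_def fr_def)

lemma K_0 [simp]: "0 \<in> K" and K_1 [simp]: "1 \<in> K" by (auto simp: K_iff)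
lemma K_add: "a \<in> K \<Longrightarrow> b \<in> K \<Longrightarrow> a + b \<in> K" by (simp add: K_iff fr_add)
lemma K_diff: "a \<in> K \<Longrightarrow> b \<in> K \<Longrightarrow> a - b \<in> K" by (simp add: K_iff fr_diff)
lemma K_neg: "a \<in> K \<Longrightarrow> - a \<in> K" by (simp add: K_iff fr_neg)
lemma K_mult: "a \<in> K \<Longrightarrow> b \<in> K \<Longrightarrow> a * b \<in> K" by (simp add: K_iff fr_mult)
lemma K_inverse: "a \<in> K \<Longrightarrow> inverse a \<in> K" by (simp add: K_iff fr_def power_inverse)
lemma K_div: "a \<in> K \<Longrightarrow> b \<in> K \<Longrightarrow> a / b \<in> K"
  by (simp add: divide_inverse K_mult K_inverse)

end


context ffq
begin

definition Fm :: "'a \<Rightarrow> 'a" where "Fm x = fr 2 x - fr 1 x + x"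
definition W :: "'a set" where "W = range Fm"
definition Phi :: "'a \<Rightarrow> 'a" where "Phi z = fr 2 z * z + fr 2 z * fr 1 z + fr 1 z * fr 3 z"
definition Bf :: "'a \<Rightarrow> 'a \<Rightarrow> 'a" where
  "Bf u v = u * fr 2 v + fr 2 u * v + fr 1 u * fr 2 v + fr 2 u * fr 1 v + fr 1 u * fr 3 v + fr 3 u * fr 1 v"
definition Tr :: "'a \<Rightarrow> 'a" where "Tr y = y + fr 1 y + fr 2 y + fr 3 y + fr 4 y + fr 5 y"

lemma W_rel4: assumes "z \<in> W" shows "fr 4 z = z + fr 1 z - fr 3 z"
proof -
  obtain x where z: "z = Fm x" using assms by (auto simp: W_def)
  show ?thesis unfolding z Fm_def by (simp add: fr_simps)
qed

lemma W_rel5: assumes "z \<in> W" shows "fr 5 z = fr 2 z + fr 3 z - z"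
proof -
  have "fr 5 z = fr 1 (fr 4 z)" by simp
  also have "\<dots> = fr 1 z + fr 2 z - fr 4 z" by (subst W_rel4[OF assms], simp add: fr_simps)
  also have "\<dots> = fr 2 z + fr 3 z - z" by (simp add: W_rel4[OF assms])
  finally show ?thesis .
qed

lemma Phi_K: assumes "z \<in> W" shows "Phi z \<in> K"
  unfolding K_iff Phi_def by (simp add: fr_simps W_rel4[OF assms] algebra_simps)

lemma polar_Phi: "polar Phi u v = Bf u v"
  unfolding polar_def Phi_def Bf_def by (simp add: fr_simps algebra_simps)

lemma Phi_scale: "c \<in> K \<Longrightarrow> Phi (c * v) = c^2 * Phi v"
  unfolding Phi_def by (simp add: fr_simps K_fr power2_eq_square algebra_simps)

lemma Bf_add: "Bf (u + u') v = Bf u v + Bf u' v"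
  unfolding Bf_def by (simp add: fr_simps algebra_simps)

lemma Bf_scale: "c \<in> K \<Longrightarrow> Bf (c * u) v = c * Bf u v"
  unfolding Bf_def by (simp add: fr_simps K_fr algebra_simps)

lemma key_identity:
  "(fr 2 u * fr 1 v - fr 1 u * fr 2 v) * (u * fr 1 v - fr 1 u * v)
     = (fr 1 v)^2 * Phi u - fr 1 u * fr 1 v * Bf u v + (fr 1 u)^2 * Phi v"
  unfolding Phi_def Bf_def by (simp add: power2_eq_square algebra_simps)

lemma Bf_trace: assumes "v \<in> W" shows "Bf v (Fm x) = Tr (fr 2 v * x)"
  unfolding Bf_def Fm_def Tr_def
  by (simp add: fr_simps W_rel4[OF assms] W_rel5[OF assms] algebra_simps)

end


lemma card_roots_le:
  fixes r :: "'b::{comm_ring_1,ring_no_zero_divisors} poly"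
  assumes "degree r < N" "\<forall>x\<in>A. x ^ N + poly r x = 0"
  shows "card A \<le> N"
proof -
  define p where "p = monom 1 N + r"
  have dp: "degree p = N" unfolding p_def
    using assms(1) by (subst degree_add_eq_left) (auto simp: degree_monom_eq)
  have p0: "p \<noteq> 0" using dp assms(1) by auto
  have "A \<subseteq> {x. poly p x = 0}" using assms(2) by (auto simp: p_def poly_monom)
  then have "card A \<le> card {x. poly p x = 0}"
    using poly_roots_finite[OF p0] by (rule card_mono[rotated])
  also have "\<dots> \<le> N" using card_poly_roots_bound[OF p0] dp by simp
  finally show ?thesis .
qed

lemma degree_monom_le': "n \<le> m \<Longrightarrow> degree (monom c n) \<le> m"
  using degree_monom_le[of c n] by linarith

lemma card_additive:
  fixes f :: "'a::{finite,ab_group_add} \<Rightarrow> 'b::ab_group_add"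
  assumes add: "\<And>x y. f (x + y) = f x + f y"
  shows "card (UNIV :: 'a set) \<le> card (range f) * card {x. f x = 0}"
proof -
  have diff: "f (a - b) = f a - f b" for a b
    using add[of "a - b" b] by (simp add: algebra_simps)
  have U: "UNIV = (\<Union>y\<in>range f. f -` {y})" by auto
  have fib: "card (f -` {y}) \<le> card {x. f x = 0}" if y: "y \<in> range f" for y
  proof -
    obtain x0 where x0: "f x0 = y" using y by auto
    have "f -` {y} \<subseteq> (\<lambda>k. x0 + k) ` {x. f x = 0}"
    proof
      fix x assume "x \<in> f -` {y}"
      then have "f (x - x0) = 0" using x0 diff by simp
      then show "x \<in> (\<lambda>k. x0 + k) ` {x. f x = 0}" by (intro image_eqI[of _ _ "x - x0"]) auto
    qed
    then have "card (f -` {y}) \<le> card ((\<lambda>k. x0 + k) ` {x. f x = 0})" by (intro card_mono) auto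
    also have "\<dots> \<le> card {x. f x = 0}" by (rule card_image_le) simp
    finally show ?thesis .
  qed
  have "card (UNIV :: 'a set) \<le> (\<Sum>y\<in>range f. card (f -` {y}))"
    by (subst U, rule card_UN_le) simp
  also have "\<dots> \<le> (\<Sum>y\<in>range f. card {x. f x = 0})" by (rule sum_mono) (rule fib)
  also have "\<dots> = card (range f) * card {x. f x = 0}" by simp
  finally show ?thesis .
qed

context ffq
begin

lemma qpow_le: "i \<le> j \<Longrightarrow> q ^ i \<le> q ^ j" using q_gt1 by (simp add: power_increasing)
lemma qpow_less: "i < j \<Longrightarrow> q ^ i < q ^ j" using q_gt1 by (simp add: power_strict_increasing)

lemma fr_as_pow: "fr i x = x ^ (q ^ i)" by (simp add: fr_def)

lemma Tr_roots: "card {y. Tr y = 0} \<le> q ^ 5"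
proof (rule card_roots_le[where r = "monom 1 (q^4) + monom 1 (q^3) + monom 1 (q^2) + monom 1 q + monom 1 1"])
  show "degree (monom 1 (q^4) + monom 1 (q^3) + monom 1 (q^2) + monom 1 q + monom (1::'a) 1) < q ^ 5"
  proof -
    have "degree (monom 1 (q^4) + monom 1 (q^3) + monom 1 (q^2) + monom 1 q + monom (1::'a) 1) \<le> q ^ 4"
      using qpow_le[of 3 4] qpow_le[of 2 4] qpow_le[of 1 4] qpow_le[of 0 4]
      by (intro degree_add_le degree_monom_le') auto
    then show ?thesis using qpow_less[of 4 5] by linarith
  qed
  show "\<forall>x\<in>{y. Tr y = 0}. x ^ q ^ 5 + poly (monom 1 (q^4) + monom 1 (q^3) + monom 1 (q^2) + monom 1 q + monom 1 1) x = 0"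
    by (auto simp: Tr_def fr_as_pow poly_monom algebra_simps)
qed

lemma Tr_nonzero: "\<exists>y. Tr y \<noteq> 0"
proof (rule ccontr)
  assume "\<not> ?thesis"
  then have "{y. Tr y = 0} = UNIV" by auto
  then have "q ^ 6 \<le> q ^ 5" using Tr_roots cardF by simp
  then show False using qpow_less[of 5 6] by simp
qed

lemma card_K_le: "card K \<le> q"
proof (rule card_roots_le[where r = "- monom 1 1"])
  show "degree (- monom (1::'a) 1) < q" using q_gt1 by (simp add: degree_monom_eq)
  show "\<forall>x\<in>K. x ^ q + poly (- monom 1 1) x = 0" by (auto simp: K_def poly_monom)
qed

lemma Tr_fr1: "Tr (fr 1 x - x) = 0"
  by (simp add: Tr_def fr_simps)

lemma card_K_ge: "q \<le> card K"
proof -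
  define f where "f x = fr 1 x - x" for x
  have "card (UNIV :: 'a set) \<le> card (range f) * card {x. f x = 0}"
    by (rule card_additive) (simp add: f_def fr_simps)
  moreover have "{x. f x = 0} = K" by (auto simp: f_def K_iff)
  moreover have "card (range f) \<le> q ^ 5"
  proof -
    have "range f \<subseteq> {y. Tr y = 0}" by (auto simp: f_def Tr_fr1)
    then have "card (range f) \<le> card {y. Tr y = 0}" by (intro card_mono) auto
    then show ?thesis using Tr_roots by linarith
  qed
  ultimately have h: "q ^ 6 \<le> q ^ 5 * card K" using cardF
    by (metis le_trans mult_le_mono1)
  have e: "q ^ 6 = q * q ^ 5" by (simp add: power_Suc[symmetric])
  have a: "q * q ^ 5 \<le> card K * q ^ 5" using h e by (metis mult.commute)
  have "0 < q ^ 5" using q_gt1 by simp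
  then show ?thesis using a by (metis mult_le_cancel2)
qed

lemma card_K: "card K = q" using card_K_le card_K_ge by simp

lemma card_W_le: "card W \<le> q ^ 4"
proof (rule card_roots_le[where r = "monom 1 (q^3) - monom 1 q - monom 1 1"])
  show "degree (monom 1 (q^3) - monom 1 q - monom (1::'a) 1) < q ^ 4"
  proof -
    have "degree (monom 1 (q^3) - monom 1 q - monom (1::'a) 1) \<le> q ^ 3"
      using qpow_le[of 1 3] qpow_le[of 0 3]
      by (intro degree_diff_le degree_monom_le') auto
    then show ?thesis using qpow_less[of 3 4] by linarith
  qed
  show "\<forall>x\<in>W. x ^ q ^ 4 + poly (monom 1 (q^3) - monom 1 q - monom 1 1) x = 0"
  proof
    fix x assume "x \<in> W"
    from W_rel4[OF this] show "x ^ q ^ 4 + poly (monom 1 (q^3) - monom 1 q - monom 1 1) x = 0"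
      by (simp add: fr_as_pow poly_monom algebra_simps)
  qed
qed

lemma card_ker_le: "card {x. Fm x = 0} \<le> q ^ 2"
proof (rule card_roots_le[where r = "monom 1 1 - monom 1 q"])
  show "degree (monom 1 1 - monom (1::'a) q) < q ^ 2"
  proof -
    have "degree (monom 1 1 - monom (1::'a) q) \<le> q"
      using q_gt1 by (intro degree_diff_le degree_monom_le') auto
    then show ?thesis using qpow_less[of 1 2] by simp
  qed
  show "\<forall>x\<in>{x. Fm x = 0}. x ^ q ^ 2 + poly (monom 1 1 - monom 1 q) x = 0"
    by (auto simp: Fm_def fr_as_pow poly_monom algebra_simps)
qed

lemma card_W: "card W = q ^ 4"
proof -
  have "card (UNIV :: 'a set) \<le> card W * card {x. Fm x = 0}"
    unfolding W_def by (rule card_additive) (simp add: Fm_def fr_simps)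
  then have "q ^ 4 * q ^ 2 \<le> card W * q ^ 2"
  proof -
    have "q ^ 6 \<le> card W * card {x. Fm x = 0}" using cardF \<open>card UNIV \<le> _\<close> by simp
    also have "\<dots> \<le> card W * q ^ 2" using card_ker_le by (rule mult_le_mono2)
    finally show ?thesis by (simp add: power_add[symmetric])
  qed
  moreover have "0 < q ^ 2" using q_gt1 by simp
  ultimately have "q ^ 4 \<le> card W" by (metis mult_le_cancel2)
  then show ?thesis using card_W_le by simp
qed

end


fun lc :: "'a::field list \<Rightarrow> 'a list \<Rightarrow> 'a" where
  "lc (c # cs) (b # bs) = c * b + lc cs bs"
| "lc _ _ = 0"

definition lists_in :: "'a set \<Rightarrow> nat \<Rightarrow> 'a list set" where
  "lists_in A n = {cs. set cs \<subseteq> A \<and> length cs = n}"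

lemma lc_diff:
  "length cs = length bs \<Longrightarrow> length ds = length bs \<Longrightarrow>
   lc cs bs - lc ds bs = lc (map2 (-) cs ds) bs"
proof (induction bs arbitrary: cs ds)
  case Nil then show ?case by simp
next
  case (Cons b bs)
  obtain c cs' where c: "cs = c # cs'" using Cons.prems by (cases cs) auto
  obtain d ds' where d: "ds = d # ds'" using Cons.prems by (cases ds) auto
  have h: "lc cs' bs - lc ds' bs = lc (map2 (-) cs' ds') bs"
    using Cons.IH Cons.prems c d by simp
  show ?case unfolding c d by (simp add: h[symmetric] algebra_simps)
qed

lemma lc_scale: "k * lc cs bs = lc (map ((*) k) cs) bs"
  by (induction cs bs rule: lc.induct) (simp_all add: algebra_simps)

lemma length_map2_eq: "length cs = n \<Longrightarrow> length ds = n \<Longrightarrow> length (map2 f cs ds) = n"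
  by simp

context ffq
begin

definition span :: "'a list \<Rightarrow> 'a set" where
  "span bs = (\<lambda>cs. lc cs bs) ` lists_in K (length bs)"

definition indep :: "'a list \<Rightarrow> bool" where
  "indep bs \<longleftrightarrow> inj_on (\<lambda>cs. lc cs bs) (lists_in K (length bs))"

lemma W_0: "0 \<in> W" unfolding W_def by (rule image_eqI[of _ _ 0]) (simp_all add: Fm_def)
lemma Fm_add: "Fm (x + y) = Fm x + Fm y" by (simp add: Fm_def fr_simps)
lemma Fm_scale: "c \<in> K \<Longrightarrow> Fm (c * x) = c * Fm x"
  by (simp add: Fm_def fr_simps K_fr right_diff_distrib distrib_left)
lemma W_add: "u \<in> W \<Longrightarrow> v \<in> W \<Longrightarrow> u + v \<in> W"
  unfolding W_def by (auto simp: Fm_add[symmetric])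
lemma W_scale: "c \<in> K \<Longrightarrow> v \<in> W \<Longrightarrow> c * v \<in> W"
  unfolding W_def by (auto simp: Fm_scale[symmetric])

lemma lc_in_W: "set cs \<subseteq> K \<Longrightarrow> set bs \<subseteq> W \<Longrightarrow> lc cs bs \<in> W"
  by (induction cs bs rule: lc.induct) (auto simp: W_0 W_add W_scale)

lemma span_W: "set bs \<subseteq> W \<Longrightarrow> span bs \<subseteq> W"
  unfolding span_def lists_in_def using lc_in_W by auto

lemma finite_lists_in: "finite (lists_in K n)"
  unfolding lists_in_def by (rule finite_lists_length_eq) simp

lemma card_lists_in: "card (lists_in K n) = q ^ n"
  unfolding lists_in_def using card_lists_length_eq[of K n] card_K by simp

lemma card_span: "indep bs \<Longrightarrow> card (span bs) = q ^ length bs"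
  unfolding span_def indep_def by (simp add: card_image card_lists_in)

lemma set_map2_sub: "set cs \<subseteq> K \<Longrightarrow> set ds \<subseteq> K \<Longrightarrow> set (map2 (-) cs ds) \<subseteq> K"
proof (induction cs arbitrary: ds)
  case (Cons c cs)
  then show ?case by (cases ds) (auto intro: K_diff)
qed simp

lemma indep_Nil: "indep []"
  unfolding indep_def lists_in_def by (auto intro: inj_onI)

lemma indep_Cons:
  assumes ind: "indep bs" and nb: "b \<notin> span bs"
  shows "indep (b # bs)"
  unfolding indep_def
proof (rule inj_onI)
  fix xs ys assume xs: "xs \<in> lists_in K (length (b # bs))" and ys: "ys \<in> lists_in K (length (b # bs))"
    and eq: "lc xs (b # bs) = lc ys (b # bs)"
  from xs obtain c cs where xs': "xs = c # cs" "c \<in> K" "set cs \<subseteq> K" "length cs = length bs"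
    unfolding lists_in_def by (auto simp: length_Suc_conv)
  from ys obtain d ds where ys': "ys = d # ds" "d \<in> K" "set ds \<subseteq> K" "length ds = length bs"
    unfolding lists_in_def by (auto simp: length_Suc_conv)
  have eq': "c * b + lc cs bs = d * b + lc ds bs" using eq xs' ys' by simp
  show "xs = ys"
  proof (cases "c = d")
    case True
    then have "lc cs bs = lc ds bs" using eq' by simp
    then have "cs = ds" using ind xs' ys' unfolding indep_def lists_in_def by (auto dest: inj_onD)
    then show ?thesis using True xs' ys' by simp
  next
    case False
    have "(c - d) * b = lc ds bs - lc cs bs" using eq' by (simp add: algebra_simps)
    also have "\<dots> = lc (map2 (-) ds cs) bs" using xs' ys' by (simp add: lc_diff)
    finally have "b = inverse (c - d) * lc (map2 (-) ds cs) bs" using False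
      by (simp add: field_simps)
    also have "\<dots> = lc (map ((*) (inverse (c - d))) (map2 (-) ds cs)) bs" by (rule lc_scale)
    finally have "b \<in> span bs" unfolding span_def lists_in_def
      using xs' ys' set_map2_sub[of ds cs] K_inverse[OF K_diff[of c d]]
      by (intro image_eqI[of _ _ "map ((*) (inverse (c - d))) (map2 (-) ds cs)"]) (auto intro: K_mult)
    then show ?thesis using nb by simp
  qed
qed

lemma exists_indep: "n \<le> 4 \<Longrightarrow> \<exists>bs. length bs = n \<and> set bs \<subseteq> W \<and> indep bs"
proof (induction n)
  case 0 then show ?case using indep_Nil by auto
next
  case (Suc n)
  then obtain bs where bs: "length bs = n" "set bs \<subseteq> W" "indep bs" by auto
  have "card (span bs) = q ^ n" using card_span bs by simp
  also have "\<dots> < q ^ 4" using Suc.prems qpow_less by simp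
  finally have "span bs \<noteq> W" using card_W by auto
  then obtain b where b: "b \<in> W" "b \<notin> span bs" using span_W[OF bs(2)] by auto
  show ?case using bs b indep_Cons by (intro exI[of _ "b # bs"]) auto
qed

end


context ffq
begin

lemma subspace_W: "is_subspace K W"
  unfolding is_subspace_def using W_0 W_add W_scale by auto

lemma lc4: "lc [c0, c1, c2, c3] [b0, b1, b2, b3] = c0*b0 + c1*b1 + c2*b2 + c3*b3"
  by (simp add: add.assoc)

lemma dim4_W: "dim4_subspace K W"
proof -
  obtain bs where bs: "length bs = 4" "set bs \<subseteq> W" "indep bs" using exists_indep[of 4] by auto
  then obtain b0 b1 b2 b3 where bdef: "bs = [b0, b1, b2, b3]"
    by (auto simp: numeral_eq_Suc length_Suc_conv)
  have sp: "span bs = W"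
  proof (rule card_subset_eq)
    show "finite W" by simp
    show "span bs \<subseteq> W" using span_W bs by simp
    show "card (span bs) = card W" using card_span[OF bs(3)] bs(1) card_W by simp
  qed
  have li: "lin_indep4 K b0 b1 b2 b3"
    unfolding lin_indep4_def
  proof (intro ballI impI)
    fix c0 c1 c2 c3 assume c: "c0 \<in> K" "c1 \<in> K" "c2 \<in> K" "c3 \<in> K"
      and z: "c0*b0 + c1*b1 + c2*b2 + c3*b3 = 0"
    have "lc [c0, c1, c2, c3] bs = lc [0, 0, 0, 0] bs" unfolding bdef lc4 using z by simp
    moreover have "[c0, c1, c2, c3] \<in> lists_in K (length bs)" "[0, 0, 0, 0] \<in> lists_in K (length bs)"
      using c bdef by (auto simp: lists_in_def)
    ultimately have "[c0, c1, c2, c3] = [0, 0, 0, 0]" using bs(3) unfolding indep_def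
      by (auto dest: inj_onD)
    then show "c0 = 0 \<and> c1 = 0 \<and> c2 = 0 \<and> c3 = 0" by simp
  qed
  have Weq: "W = {c0*b0 + c1*b1 + c2*b2 + c3*b3 | c0 c1 c2 c3. c0\<in>K \<and> c1\<in>K \<and> c2\<in>K \<and> c3\<in>K}"
  proof -
    have "span bs = {c0*b0 + c1*b1 + c2*b2 + c3*b3 | c0 c1 c2 c3. c0\<in>K \<and> c1\<in>K \<and> c2\<in>K \<and> c3\<in>K}" (is "_ = ?S")
    proof
      show "span bs \<subseteq> ?S"
      proof
        fix x assume "x \<in> span bs"
        then obtain cs where cs: "set cs \<subseteq> K" "length cs = 4" "x = lc cs bs"
          unfolding span_def lists_in_def using bs(1) by auto
        then obtain c0 c1 c2 c3 where "cs = [c0, c1, c2, c3]"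
          by (auto simp: numeral_eq_Suc length_Suc_conv)
        then show "x \<in> {c0*b0 + c1*b1 + c2*b2 + c3*b3 | c0 c1 c2 c3. c0\<in>K \<and> c1\<in>K \<and> c2\<in>K \<and> c3\<in>K}"
          using cs by (auto simp: bdef add.assoc)
      qed
      show "?S \<subseteq> span bs"
      proof
        fix x assume "x \<in> {c0*b0 + c1*b1 + c2*b2 + c3*b3 | c0 c1 c2 c3. c0\<in>K \<and> c1\<in>K \<and> c2\<in>K \<and> c3\<in>K}"
        then obtain c0 c1 c2 c3 where c: "c0\<in>K" "c1\<in>K" "c2\<in>K" "c3\<in>K" "x = c0*b0 + c1*b1 + c2*b2 + c3*b3"
          by auto
        then show "x \<in> span bs" unfolding span_def lists_in_def
          by (intro image_eqI[of _ _ "[c0, c1, c2, c3]"]) (auto simp: bdef lc4)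
      qed
    qed
    then show ?thesis using sp by simp
  qed
  have bW: "b0 \<in> W" "b1 \<in> W" "b2 \<in> W" "b3 \<in> W" using bs(2) bdef by auto
  show ?thesis unfolding dim4_subspace_def
    by (rule conjI[OF subspace_W], rule bexI[OF _ bW(1)], rule bexI[OF _ bW(2)],
        rule bexI[OF _ bW(3)], rule bexI[OF _ bW(4)], rule conjI[OF li Weq])
qed

lemma qf_W: "quadratic_form_on K W Phi"
  unfolding quadratic_form_on_def polar_Phi
  using Phi_K Phi_scale Bf_add Bf_scale by auto

lemma nonsing_W: "nonsingular_qf W Phi"
  unfolding nonsingular_qf_def
proof (intro ballI impI)
  fix v assume v: "v \<in> W" and h: "v \<noteq> 0 \<and> Phi v = 0 \<and> (\<forall>w\<in>W. polar Phi v w = 0)"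
  obtain y where y: "Tr y \<noteq> 0" using Tr_nonzero by auto
  define x where "x = y / fr 2 v"
  have "fr 2 v \<noteq> 0" using h by simp
  then have "fr 2 v * x = y" by (simp add: x_def)
  moreover have "Fm x \<in> W" by (simp add: W_def)
  ultimately have "Tr y = 0" using h Bf_trace[OF v, of x] polar_Phi by metis
  then show False using y by simp
qed

lemma fr_divide: "fr i (x / y) = fr i x / fr i y" by (simp add: fr_def power_divide)

lemma noline_W: "contains_no_line K W Phi"
  unfolding contains_no_line_def
proof (intro ballI impI notI)
  fix u v assume H: "\<forall>a\<in>K. \<forall>b\<in>K. a * u + b * v = 0 \<longrightarrow> a = 0 \<and> b = 0"
    and Z: "\<forall>a\<in>K. \<forall>b\<in>K. Phi (a * u + b * v) = 0"
  have pu: "Phi u = 0" using Z[rule_format, of 1 0] by simp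
  have pv: "Phi v = 0" using Z[rule_format, of 0 1] by simp
  have puv: "Phi (u + v) = 0" using Z[rule_format, of 1 1] by simp
  have b: "Bf u v = 0" using pu pv puv polar_Phi[of u v] by (simp add: polar_def)
  define m where "m = u * fr 1 v - fr 1 u * v"
  have f1: "fr 2 u * fr 1 v - fr 1 u * fr 2 v = - fr 1 m" by (simp add: m_def fr_simps)
  have "(- fr 1 m) * m = 0" using key_identity[of u v] pu pv b f1 by (simp add: m_def)
  then have m0: "m = 0" by simp
  show False
  proof (cases "u = 0")
    case True
    then show False using H[rule_format, of 1 0] by simp
  next
    case False
    define c where "c = v / u"
    have "fr 1 u \<noteq> 0" using False by simp
    then have "fr 1 c = c" using m0 False by (simp add: c_def fr_divide m_def field_simps)
    then have cK: "c \<in> K" by (simp add: K_iff)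
    have "c * u + (-1) * v = 0" using False by (simp add: c_def)
    then show False using H[rule_format, OF cK K_neg[OF K_1]] by simp
  qed
qed

lemma elliptic: "elliptic_quadric K W Phi"
  unfolding elliptic_quadric_def using dim4_W qf_W nonsing_W noline_W by auto

end

theorem mainTheorem16:
  fixes q :: nat
  assumes "\<exists>p k. prime p \<and> k > 0 \<and> q = p ^ k"
    and "card (UNIV :: 'a set) = q ^ 6"
  shows "elliptic_quadric (subfield_q q :: ('a::{finite,field}) set)
           ((\<lambda>x::'a. x ^ (q^2) - x ^ q + x) ` UNIV)
           (\<lambda>z. z ^ (q^2) * z + z ^ (q^2) * z ^ q + z ^ q * z ^ (q^3))"
proof -
  have s: "q > 1 \<and> (\<forall>x y :: 'a. (x + y) ^ q = x ^ q + y ^ q)" by (rule frob_setup[OF assms])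
  interpret ffq q "TYPE('a)"
    using s assms(2) by unfold_locales auto
  have e1: "subfield_q q = K" by (simp add: subfield_q_def K_def)
  have e2: "(\<lambda>x::'a. x ^ (q^2) - x ^ q + x) ` UNIV = W" by (simp add: W_def Fm_def fr_def)
  have e3: "(\<lambda>z::'a. z ^ (q^2) * z + z ^ (q^2) * z ^ q + z ^ q * z ^ (q^3)) = Phi"
    by (simp add: fun_eq_iff Phi_def fr_def)
  show ?thesis using elliptic e1 e2 e3 by simp
qed

end
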